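(* Let $X$ be a real reflexive Banach space and let $\varepsilon\in[0,2)$. Then $X$ is $\varepsilon$-smooth if and only if $\mathcal{S}(X^* )\le\varepsilon$.
   Context: For a normed space $Z$ and $z\in Z\setminus\{\theta\}$, $J(z)=\{\phi\in S_{Z^*}:\phi(z)=\|z\|\}$, where $S_{Z^*}$ is the unit sphere of the dual. A point $z$ is $\varepsilon$-smooth if $\operatorname{diam}J(z)\le\varepsilon$ ($\operatorname{diam}A=\sup_{a,b\in A}\|a-b\|$); the space $Z$ is $\varepsilon$-smooth if every $z\in S_Z$ is $\varepsilon$-smooth. For a normed space $W$, $\mathcal{S}(W)=\sup\{\operatorname{diam}(H\cap S_W): H \text{ a supporting hyperplane of } B_W\}$, where a supporting hyperplane of $B_W$ is a set $\{w\in W:\phi(w)=1\}$ with $\phi\in S_{W^*}$; equivalently $\mathcal{S}(W)=\sup\{\operatorname{diam}\{w\in S_W:\phi(w)=1\}:\phi\in S_{W^*}\}$. Here it is applied with $W=X^*$. *)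

theory Defs
  imports "HOL-Analysis.Analysis"
begin

definition duality_set :: "'a::real_normed_vector \<Rightarrow> ('a \<Rightarrow>\<^sub>L real) set" where
  "duality_set z = {\<phi>. norm \<phi> = 1 \<and> blinfun_apply \<phi> z = norm z}"

definition eps_smooth_point :: "real \<Rightarrow> 'a::real_normed_vector \<Rightarrow> bool" where
  "eps_smooth_point \<epsilon> z \<longleftrightarrow> diameter (duality_set z) \<le> \<epsilon>"

definition eps_smooth_space :: "real \<Rightarrow> 'a::real_normed_vector itself \<Rightarrow> bool" where
  "eps_smooth_space \<epsilon> (_::'a itself) \<longleftrightarrow> (\<forall>z::'a. norm z = 1 \<longrightarrow> eps_smooth_point \<epsilon> z)"

text \<open>S(W): supremum over norm-one functionals psi on W of diam {w in S_W. psi w = 1};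
  taken in the extended reals so that the supremum over an empty index set is -infinity.\<close>
definition calS :: "'w::real_normed_vector itself \<Rightarrow> ereal" where
  "calS (_::'w itself) =
     (SUP \<psi> \<in> {\<psi> :: 'w \<Rightarrow>\<^sub>L real. norm \<psi> = 1}.
        ereal (diameter {w::'w. norm w = 1 \<and> blinfun_apply \<psi> w = 1}))"

definition reflexive_space :: "'a::real_normed_vector itself \<Rightarrow> bool" where
  "reflexive_space (_::'a itself) \<longleftrightarrow>
     (\<forall>\<Psi> :: ('a \<Rightarrow>\<^sub>L real) \<Rightarrow>\<^sub>L real. \<exists>x::'a. \<forall>\<phi>. blinfun_apply \<Psi> \<phi> = blinfun_apply \<phi> x)"

end

theory Submission imports Defs begin

lemma hb_norming:
  fixes x :: "'a::real_normed_vector"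
  shows "\<exists>\<phi>::'a \<Rightarrow>\<^sub>L real. norm \<phi> \<le> 1 \<and> blinfun_apply \<phi> x = norm x"
proof -
  define A where "A = {G :: ('a \<times> real) set. subspace G \<and> (x, norm x) \<in> G \<and> (\<forall>p\<in>G. snd p \<le> norm (fst p))}"
  define G0 where "G0 = span {(x, norm x)}"
  have G0A: "G0 \<in> A"
  proof -
    have "snd p \<le> norm (fst p)" if "p \<in> G0" for p
    proof -
      from that obtain k where "p = k *\<^sub>R (x, norm x)" unfolding G0_def span_singleton by auto
      then show ?thesis by (auto intro: mult_right_mono)
    qed
    then show ?thesis unfolding A_def G0_def by (auto intro: span_base)
  qed
  have "\<forall>C\<in>chains A. \<exists>U\<in>A. \<forall>X\<in>C. X \<subseteq> U"
  proof
    fix C assume C: "C \<in> chains A"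
    show "\<exists>U\<in>A. \<forall>X\<in>C. X \<subseteq> U"
    proof (cases "C = {}")
      case True then show ?thesis using G0A by auto
    next
      case False
      have CA: "C \<subseteq> A" using chainsD2[OF C] .
      have "subspace (\<Union>C)"
        unfolding subspace_def
      proof (intro conjI ballI allI)
        from False obtain S where "S \<in> C" by auto
        then show "0 \<in> \<Union>C" using CA unfolding A_def by (auto simp: subspace_def)
      next
        fix a b assume a: "a \<in> \<Union>C" and b: "b \<in> \<Union>C"
        then obtain S1 S2 where S1: "S1 \<in> C" "a \<in> S1" and S2: "S2 \<in> C" "b \<in> S2" by auto
        have s1: "subspace S1" and s2: "subspace S2" using S1 S2 CA unfolding A_def by auto
        from chainsD[OF C S1(1) S2(1)] show "a + b \<in> \<Union>C"
          using S1 S2 s1 s2 by (metis UnionI subsetD subspace_add)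
      next
        fix c a assume a: "a \<in> \<Union>C"
        then obtain S1 where S1: "S1 \<in> C" "a \<in> S1" by auto
        have s1: "subspace S1" using S1 CA unfolding A_def by auto
        then show "c *\<^sub>R a \<in> \<Union>C" using S1 by (meson UnionI subspace_scale)
      qed
      moreover have "(x, norm x) \<in> \<Union>C" using False CA unfolding A_def by auto
      moreover have "\<forall>p\<in>\<Union>C. snd p \<le> norm (fst p)" using CA unfolding A_def by auto
      ultimately have "\<Union>C \<in> A" unfolding A_def by auto
      then show ?thesis by auto
    qed
  qed
  from Zorn_Lemma2[OF this] obtain M where MA: "M \<in> A" and Mmax: "\<forall>X\<in>A. M \<subseteq> X \<longrightarrow> X = M" by blast
  have Msub: "subspace M" and xM: "(x, norm x) \<in> M" and Mdom: "\<And>v b. (v, b) \<in> M \<Longrightarrow> b \<le> norm v"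
    using MA unfolding A_def by auto
  have M0: "(0, 0) \<in> M" using Msub subspace_0 by (metis zero_prod_def)
  have Mscale: "(t *\<^sub>R v, t * b) \<in> M" if "(v, b) \<in> M" for t v b
    using subspace_scale[OF Msub that, of t] by simp
  have Madd: "(v + w, b + d) \<in> M" if "(v, b) \<in> M" "(w, d) \<in> M" for v w b d
    using subspace_add[OF Msub that] by simp
  have total: "\<exists>a. (u, a) \<in> M" for u
  proof (rule ccontr)
    assume nu: "\<not> (\<exists>a. (u, a) \<in> M)"
    define T where "T = {snd p - norm (fst p - u) | p. p \<in> M}"
    define c where "c = Sup T"
    have key: "b - norm (w - u) \<le> norm (w' + u) - b'" if "(w, b) \<in> M" "(w', b') \<in> M" for w b w' b'
    proof -
      have "b + b' \<le> norm (w + w')" using Mdom[OF Madd[OF that]] .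
      also have "w + w' = (w - u) + (w' + u)" by simp
      also have "norm \<dots> \<le> norm (w - u) + norm (w' + u)" by (rule norm_triangle_ineq)
      finally show ?thesis by simp
    qed
    have Tne: "T \<noteq> {}" using M0 unfolding T_def by auto
    have Tbdd: "bdd_above T" unfolding T_def bdd_above_def
      using key[OF _ M0] by force
    have cup: "b - norm (w - u) \<le> c" if "(w, b) \<in> M" for w b
      unfolding c_def by (rule cSup_upper[OF _ Tbdd]) (use that T_def in force)
    have clow: "c \<le> norm (w' + u) - b'" if "(w', b') \<in> M" for w' b'
      unfolding c_def by (rule cSup_least[OF Tne]) (use key that T_def in force)
    define M' where "M' = span (insert (u, c) M)"
    have dom': "snd q \<le> norm (fst q)" if "q \<in> M'" for q
    proof -
      from that obtain k where "q - k *\<^sub>R (u, c) \<in> span M" unfolding M'_def span_insert by auto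
      then have "q - k *\<^sub>R (u, c) \<in> M" using Msub span_eq_iff by blast
      then obtain v b where vb: "(v, b) \<in> M" and q: "q = (v + k *\<^sub>R u, b + k * c)"
      proof -
        obtain v b where e: "q - k *\<^sub>R (u, c) = (v, b)" by (cases "q - k *\<^sub>R (u, c)") auto
        have "q = (v, b) + k *\<^sub>R (u, c)" using e by (metis diff_add_cancel)
        then have "q = (v + k *\<^sub>R u, b + k * c)" by simp
        then show ?thesis using that e \<open>q - k *\<^sub>R (u, c) \<in> M\<close> by auto
      qed
      consider "k = 0" | "k > 0" | "k < 0" by linarith
      then show ?thesis
      proof cases
        case 1 then show ?thesis using q Mdom[OF vb] by simp
      next
        case 2
        have "c \<le> norm ((1/k) *\<^sub>R v + u) - (1/k) * b" using clow[OF Mscale[OF vb, of "1/k"]] .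
        also have "(1/k) *\<^sub>R v + u = (1/k) *\<^sub>R (v + k *\<^sub>R u)" using 2 by (simp add: algebra_simps)
        also have "norm \<dots> = norm (v + k *\<^sub>R u) / k" using 2 by simp
        finally have "c \<le> norm (v + k *\<^sub>R u) / k - b / k" by simp
        then have "k * c \<le> norm (v + k *\<^sub>R u) - b" using 2 by (simp add: field_simps)
        then show ?thesis using q by simp
      next
        case 3
        define s where "s = - k"
        have s: "s > 0" using 3 s_def by simp
        have "(1/s) * b - norm ((1/s) *\<^sub>R v - u) \<le> c" using cup[OF Mscale[OF vb, of "1/s"]] .
        moreover have "(1/s) *\<^sub>R v - u = (1/s) *\<^sub>R (v + k *\<^sub>R u)" using s s_def by (simp add: algebra_simps)
        moreover have "norm ((1/s) *\<^sub>R (v + k *\<^sub>R u)) = norm (v + k *\<^sub>R u) / s" using s by simp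
        ultimately have "b / s - norm (v + k *\<^sub>R u) / s \<le> c" by (metis divide_inverse mult.commute mult_1 )
        then have "b - norm (v + k *\<^sub>R u) \<le> s * c" using s by (simp add: field_simps)
        then show ?thesis using q s_def by simp
      qed
    qed
    have "M \<subseteq> M'" unfolding M'_def by (meson span_superset subset_insertI subset_trans)
    moreover have "M' \<in> A" unfolding A_def using dom' xM \<open>M \<subseteq> M'\<close> by (auto simp: M'_def)
    ultimately have "M' = M" using Mmax by blast
    moreover have "(u, c) \<in> M'" unfolding M'_def by (simp add: span_base)
    ultimately show False using nu by auto
  qed
  have uniq: "a = b" if "(u, a) \<in> M" "(u, b) \<in> M" for u a b
  proof -
    have "(0, a - b) \<in> M" using subspace_diff[OF Msub that] by simp
    then have 1: "a - b \<le> 0" using Mdom by fastforce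
    have "(0, b - a) \<in> M" using subspace_diff[OF Msub that(2,1)] by simp
    then have "b - a \<le> 0" using Mdom by fastforce
    with 1 show ?thesis by simp
  qed
  define f where "f u = (SOME a. (u, a) \<in> M)" for u
  have fM: "(u, f u) \<in> M" for u unfolding f_def using total by (metis someI_ex)
  have fadd: "f (u + v) = f u + f v" for u v using uniq[OF fM Madd[OF fM fM]] .
  have fscale: "f (r *\<^sub>R u) = r *\<^sub>R f u" for r u using uniq[OF fM Mscale[OF fM]] by simp
  have fle: "f u \<le> norm u" for u using Mdom[OF fM] .
  have fneg: "f (- u) = - f u" for u using fscale[of "-1" u] by simp
  have fbd: "norm (f u) \<le> norm u * 1" for u
    using fle[of u] fle[of "-u"] fneg[of u] by simp
  have bl: "bounded_linear f" by (rule bounded_linear_intro[OF fadd fscale fbd])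
  have fx: "f x = norm x" using uniq[OF fM xM] .
  show ?thesis
  proof (intro exI conjI)
    show "norm (Blinfun f) \<le> 1"
      by (rule norm_blinfun_bound) (use fbd bounded_linear_Blinfun_apply[OF bl] in auto)
    show "blinfun_apply (Blinfun f) x = norm x" using fx bounded_linear_Blinfun_apply[OF bl] by simp
  qed
qed


theorem theorem2p5:
  fixes \<epsilon> :: real
  assumes "reflexive_space TYPE('a::banach)"
    and "0 \<le> \<epsilon>" and "\<epsilon> < 2"
  shows "eps_smooth_space \<epsilon> TYPE('a) \<longleftrightarrow> calS TYPE('a \<Rightarrow>\<^sub>L real) \<le> ereal \<epsilon>"
proof
  assume sm: "eps_smooth_space \<epsilon> TYPE('a)"
  show "calS TYPE('a \<Rightarrow>\<^sub>L real) \<le> ereal \<epsilon>"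
    unfolding calS_def
  proof (rule SUP_least)
    fix \<psi> :: "('a \<Rightarrow>\<^sub>L real) \<Rightarrow>\<^sub>L real"
    assume "\<psi> \<in> {\<psi>. norm \<psi> = 1}"
    then have n\<psi>: "norm \<psi> = 1" by simp
    obtain x :: 'a where x: "\<And>\<phi>. blinfun_apply \<psi> \<phi> = blinfun_apply \<phi> x"
      using assms(1) unfolding reflexive_space_def by blast
    let ?D = "{\<phi> :: 'a \<Rightarrow>\<^sub>L real. norm \<phi> = 1 \<and> blinfun_apply \<psi> \<phi> = 1}"
    show "ereal (diameter ?D) \<le> ereal \<epsilon>"
    proof (cases "?D = {}")
      case True then show ?thesis using assms(2) by (simp add: diameter_def)
    next
      case False
      then obtain \<phi>0 :: "'a \<Rightarrow>\<^sub>L real" where p0: "norm \<phi>0 = 1" "blinfun_apply \<phi>0 x = 1" using x by auto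
      have g1: "1 \<le> norm x"
        using norm_blinfun[of \<phi>0 x] p0 by simp
      obtain \<phi>1 :: "'a \<Rightarrow>\<^sub>L real" where p1: "norm \<phi>1 \<le> 1" "blinfun_apply \<phi>1 x = norm x"
        using hb_norming by blast
      have "norm x \<le> norm \<psi> * norm \<phi>1"
        using norm_blinfun[of \<psi> \<phi>1] x p1 by simp
      also have "\<dots> \<le> 1" using n\<psi> p1 by simp
      finally have g2: "norm x \<le> 1" .
      from g1 g2 have nx: "norm x = 1" by simp
      have "?D = duality_set x" unfolding duality_set_def using x nx by auto
      moreover have "diameter (duality_set x) \<le> \<epsilon>"
        using sm nx unfolding eps_smooth_space_def eps_smooth_point_def by blast
      ultimately show ?thesis by simp
    qed
  qed
next
  assume cS: "calS TYPE('a \<Rightarrow>\<^sub>L real) \<le> ereal \<epsilon>"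
  show "eps_smooth_space \<epsilon> TYPE('a)"
    unfolding eps_smooth_space_def eps_smooth_point_def
  proof (intro allI impI)
    fix z :: 'a assume nz: "norm z = 1"
    show "diameter (duality_set z) \<le> \<epsilon>"
    proof (cases "duality_set z = {}")
      case True then show ?thesis using assms(2) by (simp add: diameter_def)
    next
      case False
      then obtain \<phi>0 :: "'a \<Rightarrow>\<^sub>L real" where p0: "norm \<phi>0 = 1" "blinfun_apply \<phi>0 z = 1"
        using nz unfolding duality_set_def by auto
      have bl: "bounded_linear (\<lambda>\<phi>::'a \<Rightarrow>\<^sub>L real. blinfun_apply \<phi> z)"
        by (rule bounded_bilinear.bounded_linear_left[OF bounded_bilinear_blinfun_apply])
      define \<psi> where "\<psi> = Blinfun (\<lambda>\<phi>::'a \<Rightarrow>\<^sub>L real. blinfun_apply \<phi> z)"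
      have \<psi>a: "blinfun_apply \<psi> \<phi> = blinfun_apply \<phi> z" for \<phi>
        unfolding \<psi>_def using bounded_linear_Blinfun_apply[OF bl] by simp
      have "norm \<psi> \<le> 1"
        by (rule norm_blinfun_bound) (simp_all add: \<psi>a, metis norm_blinfun nz mult_1_right real_norm_def)
      moreover have "1 \<le> norm \<psi>"
        using norm_blinfun[of \<psi> \<phi>0] \<psi>a p0 by simp
      ultimately have n\<psi>: "norm \<psi> = 1" by simp
      have eq: "{\<phi> :: 'a \<Rightarrow>\<^sub>L real. norm \<phi> = 1 \<and> blinfun_apply \<psi> \<phi> = 1} = duality_set z"
        unfolding duality_set_def using \<psi>a nz by auto
      have "ereal (diameter (duality_set z)) \<le> calS TYPE('a \<Rightarrow>\<^sub>L real)"
        unfolding calS_def eq[symmetric] by (rule SUP_upper) (use n\<psi> in simp)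
      then have "ereal (diameter (duality_set z)) \<le> ereal \<epsilon>" using cS by (rule order_trans)
      then show ?thesis by simp
    qed
  qed
qed

end
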